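(* In the setting where delays are available at action time, run Skipper$(\beta,\mathrm{DEW}(\eta,\beta))$ tuned by the scheme Doubling described in the context. Then for every epoch $m$ that is not the final epoch, $$\mathrm{Bound}_m(\beta_m)\le 3\sqrt{\omega_m}\le 3\,\mathrm{Bound}_m(\beta_m^* )+2e^2K\ln K+1,$$ where $\beta_m^*\in\arg\min_{\beta>0}\mathrm{Bound}_m(\beta)$.
   Context: Setting: fix integers $K\ge 2$, $T\ge 1$, $[K]=\{1,\dots,K\}$. An oblivious adversary fixes in advance losses $\ell_t^a\in[0,1]$ and nonnegative integer delays $d_t$. In each round $t$ the delay $d_t$ is revealed to the learner at the beginning of the round (delay available at action time); the learner then picks (possibly at random) $A_t\in[K]$, suffers $\ell_t^{A_t}$, and at the end of round $t$ observes the pairs $(s,\ell_s^{A_s})$ for all $s\le t$ with $s+d_s=t$. Algorithm DEW with inputs $\eta>0$ and $d_{\max}$: $\eta'=\min\{\eta,(4e\,d_{\max})^{-1}\}$, $w_0^a=1$; in round $t$ play $A_t\sim p_t$ with $p_t^a=w_{t-1}^a/\sum_b w_{t-1}^b$; at the end of the round, for each received pair $(s,\ell_s^{A_s})$ form $\hat\ell_s^a=\ell_s^a\mathbb 1(a=A_s)/p_s^a$ and update $w_t^a=w_{t-1}^a\exp(-\eta'\sum_s\hat\ell_s^a)$ (sum over pairs received in round $t$). Skipper$(\beta,\mathcal A)$ plays the actions of the base algorithm $\mathcal A$ and forwards to $\mathcal A$ only the pairs $(s,\ell_s^{A_s})$ with $d_s<\beta$. Skipper$(\beta,\mathrm{DEW}(\eta,\beta))$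 uses DEW with learning rate $\eta$ and $d_{\max}=\beta$. Doubling: rounds are partitioned into consecutive epochs indexed by $m$, with $\omega_m=2^m$, $\beta_m=\sqrt{\omega_m}/(4e\ln K)$ and $\eta_m=1/(4e\beta_m)$; in each epoch a fresh copy of Skipper$(\beta_m,\mathrm{DEW}(\eta_m,\beta_m))$ is run. For epoch $m$ let $\sigma(m)$ be its number of rounds, $S^m_\beta$ the set of its rounds with $d_t\ge\beta$, and $D^m_\beta$ the sum of $d_t$ over its rounds with $d_t<\beta$. At the beginning of each round $t$, after $d_t$ is revealed, the algorithm stays in the current epoch $m$ if, with round $t$ included in epoch $m$, $$\max\Big\{|S^m_{\beta_m}|^2,\ \Big(\tfrac{eK\sigma(m)}{2}+D^m_{\beta_m}\Big)\ln K\Big\}\le\omega_m;$$ otherwise a new epoch (with a larger index) is started at round $t$, before $A_t$ is selected. For an epoch $m$ define $$\mathrm{Bound}_m(\beta)=|S^m_\beta|+4e\beta\ln K+\frac{\sigma(m)eK/2+D^m_\beta}{4e\beta}.$$ *)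

theory Defs
  imports Complex_Main
begin

text \<open>Delays are given by d :: nat => nat (round t has delay d t, rounds 1..T). Everything below depends only on the delays and K;
  the losses and the learner's randomness play no role.\<close>

definition omega :: "nat \<Rightarrow> real" where
  "omega m = 2 ^ m"

definition beta_ep :: "nat \<Rightarrow> nat \<Rightarrow> real" where
  "beta_ep K m = sqrt (omega m) / (4 * exp 1 * ln (real K))"

definition eta_ep :: "nat \<Rightarrow> nat \<Rightarrow> real" where
  "eta_ep K m = 1 / (4 * exp 1 * beta_ep K m)"

definition S_set :: "(nat \<Rightarrow> nat) \<Rightarrow> nat set \<Rightarrow> real \<Rightarrow> nat set" where
  "S_set d A b = {t \<in> A. b \<le> real (d t)}"

definition D_sum :: "(nat \<Rightarrow> nat) \<Rightarrow> nat set \<Rightarrow> real \<Rightarrow> real" where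
  "D_sum d A b = (\<Sum>t\<in>{t \<in> A. real (d t) < b}. real (d t))"

definition epoch_cond :: "nat \<Rightarrow> (nat \<Rightarrow> nat) \<Rightarrow> nat \<Rightarrow> nat set \<Rightarrow> bool" where
  "epoch_cond K d m A \<longleftrightarrow>
     max ((real (card (S_set d A (beta_ep K m))))^2)
         ((exp 1 * real K * real (card A) / 2 + D_sum d A (beta_ep K m)) * ln (real K))
     \<le> omega m"

definition Bound :: "nat \<Rightarrow> (nat \<Rightarrow> nat) \<Rightarrow> nat set \<Rightarrow> real \<Rightarrow> real" where
  "Bound K d A b = real (card (S_set d A b)) + 4 * exp 1 * b * ln (real K)
     + (real (card A) * exp 1 * real K / 2 + D_sum d A b) / (4 * exp 1 * b)"

text \<open>A run of the doubling scheme over rounds 1..T: n epochs, epoch j consists of the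
  rounds s j, ..., s (Suc j) - 1 and has index idx j (strictly increasing).  Within an
  epoch the condition holds for every prefix (so the algorithm stays); at the first round
  of every later epoch the condition for the previous epoch (with that round included)
  fails (so a new epoch is started).\<close>
definition doubling_run ::
  "nat \<Rightarrow> nat \<Rightarrow> (nat \<Rightarrow> nat) \<Rightarrow> nat \<Rightarrow> (nat \<Rightarrow> nat) \<Rightarrow> (nat \<Rightarrow> nat) \<Rightarrow> bool" where
  "doubling_run K T d n s idx \<longleftrightarrow>
     1 \<le> n \<and> s 0 = 1 \<and> s n = T + 1 \<and>
     (\<forall>j<n. s j < s (Suc j)) \<and>
     (\<forall>j. Suc j < n \<longrightarrow> idx j < idx (Suc j)) \<and>
     (\<forall>j<n. \<forall>t. s j \<le> t \<and> t < s (Suc j) \<longrightarrow> epoch_cond K d (idx j) {s j..t}) \<and>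
     (\<forall>j. Suc j < n \<longrightarrow> \<not> epoch_cond K d (idx j) {s j..s (Suc j)})"

end

theory Submission
  imports Defs
begin

lemma card_S_insert:
  assumes "finite A"
  shows "real (card (S_set d (insert c A) b)) \<le> real (card (S_set d A b)) + 1"
proof -
  have "S_set d (insert c A) b \<subseteq> insert c (S_set d A b)" unfolding S_set_def by auto
  moreover have "finite (S_set d A b)" using assms unfolding S_set_def by auto
  ultimately have "card (S_set d (insert c A) b) \<le> card (insert c (S_set d A b))"
    by (intro card_mono) auto
  also have "\<dots> \<le> card (S_set d A b) + 1" by (simp add: card_insert_le_m1 card_insert_if)
  finally show ?thesis by linarith
qed

lemma D_nonneg: "0 \<le> D_sum d A b"
  unfolding D_sum_def by (intro sum_nonneg) auto

lemma D_insert: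
  assumes "finite A" "c \<notin> A" "0 \<le> b"
  shows "D_sum d (insert c A) b \<le> D_sum d A b + b"
proof (cases "real (d c) < b")
  case True
  have "{t \<in> insert c A. real (d t) < b} = insert c {t \<in> A. real (d t) < b}" using True by auto
  then show ?thesis unfolding D_sum_def using assms True by simp
next
  case False
  have "{t \<in> insert c A. real (d t) < b} = {t \<in> A. real (d t) < b}" using False by auto
  then show ?thesis unfolding D_sum_def using assms by simp
qed

lemma card_S_anti:
  assumes "finite A" "b \<le> b'"
  shows "card (S_set d A b') \<le> card (S_set d A b)"
  using assms unfolding S_set_def by (intro card_mono) auto

lemma D_split:
  assumes "finite A" "0 < b" "b \<le> b'"
  shows "D_sum d A b' \<le> D_sum d A b + b' * real (card (S_set d A b))"
proof -
  let ?P = "{t \<in> A. real (d t) < b}" and ?Q = "{t \<in> A. b \<le> real (d t) \<and> real (d t) < b'}"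
  have eq: "{t \<in> A. real (d t) < b'} = ?P \<union> ?Q" using assms by auto
  have "D_sum d A b' = (\<Sum>t\<in>?P. real (d t)) + (\<Sum>t\<in>?Q. real (d t))"
    unfolding D_sum_def eq using assms by (intro sum.union_disjoint) auto
  also have "(\<Sum>t\<in>?Q. real (d t)) \<le> (\<Sum>t\<in>?Q. b')" by (intro sum_mono) auto
  also have "\<dots> = b' * real (card ?Q)" by simp
  also have "card ?Q \<le> card (S_set d A b)" using assms unfolding S_set_def by (intro card_mono) auto
  then have "b' * real (card ?Q) \<le> b' * real (card (S_set d A b))" using assms by (intro mult_left_mono) auto
  finally show ?thesis unfolding D_sum_def by linarith
qed

lemma amgm: fixes p q :: real assumes "0 \<le> p" "0 \<le> q" shows "2 * sqrt (p*q) \<le> p + q"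
proof -
  have "(sqrt p - sqrt q)^2 \<ge> 0" by simp
  then show ?thesis using assms by (simp add: power2_eq_square algebra_simps real_sqrt_mult)
qed

theorem lemma5:
  fixes K T n j :: nat and d s idx :: "nat \<Rightarrow> nat" and beta_star :: real
  assumes "2 \<le> K" and "1 \<le> T"
    and "doubling_run K T d n s idx"
    and "Suc j < n"
    and "0 < beta_star"
    and "\<forall>b>0. Bound K d {s j..<s (Suc j)} beta_star \<le> Bound K d {s j..<s (Suc j)} b"
  shows "Bound K d {s j..<s (Suc j)} (beta_ep K (idx j)) \<le> 3 * sqrt (omega (idx j))
       \<and> 3 * sqrt (omega (idx j))
           \<le> 3 * Bound K d {s j..<s (Suc j)} beta_star + 2 * (exp 1)^2 * real K * ln (real K) + 1"
proof -
  define a where "a = s j"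
  define c where "c = s (Suc j)"
  define A where "A = {a..<c}"
  define m where "m = idx j"
  define w where "w = omega m"
  define u where "u = sqrt w"
  define \<beta> where "\<beta> = beta_ep K m"
  define L where "L = ln (real K)"
  define e where "e = exp (1::real)"
  define \<sigma> where "\<sigma> = real (card A)"
  have run: "1 \<le> n \<and> s 0 = 1 \<and> s n = T + 1 \<and>
     (\<forall>j<n. s j < s (Suc j)) \<and>
     (\<forall>j<n. \<forall>t. s j \<le> t \<and> t < s (Suc j) \<longrightarrow> epoch_cond K d (idx j) {s j..t}) \<and>
     (\<forall>j. Suc j < n \<longrightarrow> \<not> epoch_cond K d (idx j) {s j..s (Suc j)})"
    using assms(3) unfolding doubling_run_def by blast
  have ac: "a < c" using run assms(4) unfolding a_def c_def by auto
  have H: "\<forall>t. s j \<le> t \<and> t < s (Suc j) \<longrightarrow> epoch_cond K d (idx j) {s j..t}"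
    using run assms(4) by auto
  have c1: "epoch_cond K d m {a..c - 1}" using H[rule_format, of "c-1"] ac unfolding a_def c_def m_def
    by auto
  have "{a..c - 1} = A" using ac unfolding A_def by auto
  with c1 have cA: "epoch_cond K d m A" by simp
  have "\<not> epoch_cond K d m {a..c}"
    using run assms(4) unfolding a_def c_def m_def by auto
  moreover have "{a..c} = insert c A" using ac unfolding A_def by auto
  ultimately have c2: "\<not> epoch_cond K d m (insert c A)" by simp
  have finA: "finite A" "c \<notin> A" unfolding A_def by auto
  have cardI: "real (card (insert c A)) = \<sigma> + 1" using finA unfolding \<sigma>_def by simp
  have e0: "e > 0" "e \<ge> 2" unfolding e_def using exp_ge_add_one_self[of 1] by auto
  have L0: "L > 0" unfolding L_def using assms(1) by simp
  have L2: "L \<ge> 1/2"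
  proof -
    have "ln (1/2::real) \<le> 1/2 - 1" by (rule ln_le_minus_one) simp
    then have "ln (2::real) \<ge> 1/2" by (simp add: ln_div)
    moreover have "ln (2::real) \<le> ln (real K)" using assms(1) by simp
    ultimately show ?thesis unfolding L_def by linarith
  qed
  have K2: "real K \<ge> 2" using assms(1) by simp
  have w0: "w > 0" unfolding w_def omega_def by simp
  have u0: "u > 0" and uw: "u * u = w" unfolding u_def using w0 by auto
  have beta: "\<beta> = u / (4 * e * L)" unfolding \<beta>_def beta_ep_def u_def w_def e_def L_def by simp
  have b0: "\<beta> > 0" using beta u0 e0 L0 by simp
  have bL: "4 * e * \<beta> * L = u" using beta e0 L0 by simp
  have \<sigma>0: "\<sigma> \<ge> 0" unfolding \<sigma>_def by simp
  define S\<beta> where "S\<beta> = real (card (S_set d A \<beta>))"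
  define D\<beta> where "D\<beta> = D_sum d A \<beta>"
  have cA': "S\<beta>^2 \<le> w" "(e * real K * \<sigma> / 2 + D\<beta>) * L \<le> w"
    using cA unfolding epoch_cond_def e_def L_def \<sigma>_def \<beta>_def w_def S\<beta>_def D\<beta>_def by auto
  have S\<beta>0: "S\<beta> \<ge> 0" unfolding S\<beta>_def by simp
  have D\<beta>0: "D\<beta> \<ge> 0" unfolding D\<beta>_def by (rule D_nonneg)
  have S\<beta>u: "S\<beta> \<le> u" using cA'(1) uw u0 S\<beta>0
    by (metis power2_eq_square power2_le_imp_le less_le)
  have BB: "\<And>b. Bound K d A b = real (card (S_set d A b)) + 4 * e * b * L
     + (\<sigma> * e * real K / 2 + D_sum d A b) / (4 * e * b)"
    unfolding Bound_def e_def L_def \<sigma>_def by simp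
  have part1: "Bound K d A \<beta> \<le> 3 * u"
  proof -
    have "(\<sigma> * e * real K / 2 + D\<beta>) / (4 * e * \<beta>) = (e * real K * \<sigma> / 2 + D\<beta>) * L / u"
    proof -
      have q: "4 * e * \<beta> = u / L" using bL L0 by (simp add: field_simps)
      show ?thesis unfolding q using L0 u0 by (simp add: field_simps)
    qed
    also have "\<dots> \<le> w / u" using cA'(2) u0 by (simp add: divide_right_mono)
    also have "\<dots> = u" using uw u0 by (simp add: field_simps)
    finally have "(\<sigma> * e * real K / 2 + D\<beta>) / (4 * e * \<beta>) \<le> u" .
    then show ?thesis using BB[of \<beta>] S\<beta>u bL unfolding S\<beta>_def D\<beta>_def by (simp add: mult.commute mult.left_commute)
  qed
  define b where "b = beta_star"
  have bpos: "b > 0" unfolding b_def using assms(5) .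
  define Sb where "Sb = real (card (S_set d A b))"
  define Db where "Db = D_sum d A b"
  have Sb0: "Sb \<ge> 0" unfolding Sb_def by simp
  have Db0: "Db \<ge> 0" unfolding Db_def by (rule D_nonneg)
  have Bb: "Bound K d A b = Sb + 4 * e * b * L + (\<sigma> * e * real K / 2 + Db) / (4 * e * b)"
    using BB[of b] unfolding Sb_def Db_def .
  have KL: "real K * L \<ge> 1" using mult_mono[OF K2 L2] L2 by simp
  have B0: "Bound K d A b \<ge> 0" unfolding Bb using Sb0 Db0 \<sigma>0 e0 L0 bpos K2
    by (intro add_nonneg_nonneg divide_nonneg_nonneg mult_nonneg_nonneg) auto
  have eKL1: "e^2 * (real K * L) \<ge> 1 * 1"
      using e0 KL by (intro mult_mono) (auto simp: power2_eq_square intro: order_trans[of 1 2 "e*e"] mult_mono[of 1 e 1 e, simplified])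
  have part2: "3 * u \<le> 3 * Bound K d A b + 2 * e^2 * real K * L + 1"
  proof (cases "3 * u \<le> 2 * e^2 * real K * L + 1")
    case True then show ?thesis using B0 by linarith
  next
    case False
    have F': "3*u > 2*(e^2*(real K*L)) + 1" using False by (simp add: mult.assoc)
    have u1: "u \<ge> 1" using F' eKL1 by linarith
    have ueKL: "u \<ge> e * (real K * L)"
    proof -
      have "e * (real K * L) * 3 \<le> e * (real K * L) * (2 * e)"
        using e0 KL by (intro mult_left_mono) auto
      then show ?thesis using F' by (simp add: power2_eq_square algebra_simps)
    qed
    have "Bound K d A b \<ge> u - 1"
    proof (cases "b \<ge> \<beta>")
      case True
      have "4 * e * b * L \<ge> 4 * e * \<beta> * L" using True e0 L0 by (simp add: mult_right_mono)
      moreover have "(\<sigma> * e * real K / 2 + Db) / (4 * e * b) \<ge> 0"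
        using Db0 \<sigma>0 e0 bpos K2 by (intro divide_nonneg_nonneg) auto
      ultimately show ?thesis unfolding Bb using bL Sb0 by linarith
    next
      case False
      then have bb: "b < \<beta>" by simp
      have SbS: "S\<beta> \<le> Sb" unfolding S\<beta>_def Sb_def using card_S_anti[OF finA(1), of b \<beta> d] bb by simp
      have Dsp: "D\<beta> \<le> Db + \<beta> * Sb" unfolding D\<beta>_def Db_def Sb_def
        using D_split[OF finA(1) bpos, of \<beta> d] bb by simp
      define S' where "S' = real (card (S_set d (insert c A) \<beta>))"
      define D' where "D' = D_sum d (insert c A) \<beta>"
      have S'le: "S' \<le> S\<beta> + 1" unfolding S'_def S\<beta>_def by (rule card_S_insert[OF finA(1)])
      have D'le: "D' \<le> D\<beta> + \<beta>" unfolding D'_def D\<beta>_def using D_insert[OF finA] b0 by simp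
      have fail: "S'^2 > w \<or> (e * real K * (\<sigma> + 1) / 2 + D') * L > w"
        using c2 cardI unfolding epoch_cond_def e_def L_def \<sigma>_def \<beta>_def w_def S'_def D'_def
        by (auto simp: not_le)
      show ?thesis
      proof (cases "S'^2 > w")
        case True
        have "S' > u"
        proof (rule ccontr)
          assume "\<not> S' > u"
          then have "S' \<le> u" by simp
          moreover have "S' \<ge> 0" unfolding S'_def by simp
          ultimately have "S' * S' \<le> u * u" by (intro mult_mono) auto
          then show False using True uw by (simp add: power2_eq_square)
        qed
        moreover have "Bound K d A b \<ge> Sb"
          proof -
            have "(\<sigma> * e * real K / 2 + Db) / (4 * e * b) \<ge> 0"
              using Db0 \<sigma>0 e0 bpos K2 by (intro divide_nonneg_nonneg) auto
            moreover have "4 * e * b * L \<ge> 0" using e0 bpos L0 by simp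
            ultimately show ?thesis unfolding Bb by linarith
          qed
        ultimately show ?thesis using S'le SbS by linarith
      next
        case F2: False
        with fail have f2: "(e * real K * (\<sigma> + 1) / 2 + D') * L > w" by simp
        show ?thesis
        proof (cases "Sb \<ge> u")
          case True
          have "Bound K d A b \<ge> Sb"
          proof -
            have "(\<sigma> * e * real K / 2 + Db) / (4 * e * b) \<ge> 0"
              using Db0 \<sigma>0 e0 bpos K2 by (intro divide_nonneg_nonneg) auto
            moreover have "4 * e * b * L \<ge> 0" using e0 bpos L0 by simp
            ultimately show ?thesis unfolding Bb by linarith
          qed
          then show ?thesis using True by linarith
        next
          case Sbu: False
          define Y where "Y = \<sigma> * e * real K / 2 + Db"
          have Y0: "Y \<ge> 0" unfolding Y_def using Db0 \<sigma>0 e0 K2 by simp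
          have bLu: "\<beta> * L = u / (4 * e)" using bL e0 by (simp add: field_simps)
          have "w < (e * real K * (\<sigma> + 1) / 2 + D') * L" by (rule f2)
          also have "\<dots> \<le> (e * real K * (\<sigma> + 1) / 2 + Db + \<beta> * Sb + \<beta>) * L"
            using D'le Dsp L0 by (intro mult_right_mono) auto
          also have "\<dots> = Y * L + e * real K * L / 2 + (\<beta> * L) * (Sb + 1)"
            unfolding Y_def by (simp add: algebra_simps)
          finally have "w < Y * L + e * real K * L / 2 + u / (4 * e) * (Sb + 1)"
            unfolding bLu .
          then have h1: "4 * (Y * L) > 4 * w - 2 * e * real K * L - u * (Sb + 1) / e"
            using e0 by (simp add: field_simps)
          have "u * (Sb + 1) / e \<le> u * (u + 1) / 2"
            using e0 u0 Sbu Sb0 by (intro frac_le mult_left_mono) auto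
          also have "\<dots> \<le> u * u" using u1 u0 by (simp add: algebra_simps mult_left_mono)
          finally have h2: "u * (Sb + 1) / e \<le> u * u" .
          have h3: "2 * e * real K * L \<le> 2 * (u * u)"
          proof -
            have "u * 1 \<le> u * u" using u1 u0 by (intro mult_left_mono) auto
            then show ?thesis using ueKL by (simp add: algebra_simps)
          qed
          have "4 * (Y * L) \<ge> u * u" using h1 h2 h3 uw by linarith
          moreover have "(u - Sb) * (u - Sb) \<le> u * u" using Sbu Sb0 by (intro mult_mono) auto
          ultimately have "(u - Sb)^2 \<le> 4 * (Y * L)" by (simp add: power2_eq_square)
          then have "sqrt ((u - Sb)^2) \<le> sqrt (4 * (Y * L))" by (rule real_sqrt_le_mono)
          then have "u - Sb \<le> 2 * sqrt (Y * L)" using Sbu by (simp add: real_sqrt_mult)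
          also have "\<dots> = 2 * sqrt ((4 * e * b * L) * (Y / (4 * e * b)))"
            using e0 bpos by simp
          also have "\<dots> \<le> 4 * e * b * L + Y / (4 * e * b)"
            using e0 bpos L0 Y0 by (intro amgm) auto
          finally show ?thesis unfolding Bb Y_def by linarith
        qed
      qed
    qed
    moreover note eKL1
    ultimately show ?thesis using False B0 by (simp add: algebra_simps)
  qed
  show ?thesis using part1 part2 unfolding A_def a_def c_def m_def u_def w_def \<beta>_def b_def e_def L_def
    by simp
qed

end
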